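(* Let $i,j\in J$ be two jobs with $\varphi_i(0)>\varphi_j(0)$, $w_ip_j\neq w_jp_i$ and $t^*_{ij}\in(0,T)$. If in a complete schedule $S$ job $i$ starts at a time $t_i\in[t^*_{ij},t^*_{ij}+p_j)$, then $S$ is not a potential schedule.
   Context: $J$ is a finite set of jobs; job $j$ has processing time $p_j>0$ and weight $w_j>0$; $T=\sum_{j\in J}p_j$. A complete schedule is an ordering of $J$ processed consecutively without idle time from time $0$; job $j$ has start time $t_j$. For $t\ge 0$, $\varphi_j(t)=\frac{w_j}{p_j(p_j+t)}$. For jobs $i,j$ with $w_ip_j\neq w_jp_i$, $t^*_{ij}=\frac{w_jp_i^2-w_ip_j^2}{w_ip_j-w_jp_i}$ (the unique real $t$ with $\varphi_i(t)=\varphi_j(t)$). Dominance rule: for an interval $I\subseteq[0,\infty)$, the relation "$i$ dominates $j$ on $I$" is violated by a schedule if $j$ is processed before $i$ and both $t_j\in I$ and $t_i-p_j\in I$. The rule contains, for each pair of distinct jobs $i,j$ with $(p_i,w_i)\ne(p_j,w_j)$: (1) if $\varphi_i(t)\ge\varphi_j(t)$ for all $t\ge 0$, "$i$ dominates $j$ on $[0,\infty)$"; (2) otherwise, if $\varphi_j(t)\ge\varphi_i(t)$ for all $t\ge0$, "$j$ dominates $i$ on $[0,\infty)$"; (3) otherwise, labelling the pair so that $\varphi_i(0)>\varphi_j(0)$, $t^*_{ij}>0$ is defined and the rule contains "$i$ dominates $j$ on $[0,t^*_{ij})$" and "$j$ dominates $i$ on $[t^*_{ij},\infty)$". A complete schedule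 is a potential schedule if it violates no relation of the rule. *)

theory Defs
  imports Complex_Main
begin

definition phi :: "('a \<Rightarrow> real) \<Rightarrow> ('a \<Rightarrow> real) \<Rightarrow> 'a \<Rightarrow> real \<Rightarrow> real" where
  "phi p w j t = w j / (p j * (p j + t))"

definition tstar :: "('a \<Rightarrow> real) \<Rightarrow> ('a \<Rightarrow> real) \<Rightarrow> 'a \<Rightarrow> 'a \<Rightarrow> real" where
  "tstar p w i j = (w j * (p i)^2 - w i * (p j)^2) / (w i * p j - w j * p i)"

text \<open>A complete schedule is an ordering of J, represented as a list of the jobs in processing order.\<close>
definition complete_schedule :: "'a set \<Rightarrow> 'a list \<Rightarrow> bool" where
  "complete_schedule J \<sigma> \<longleftrightarrow> distinct \<sigma> \<and> set \<sigma> = J"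

text \<open>Start time: total processing time of the jobs preceding j (no idle time, starting at 0).\<close>
definition start :: "('a \<Rightarrow> real) \<Rightarrow> 'a list \<Rightarrow> 'a \<Rightarrow> real" where
  "start p \<sigma> j = sum_list (map p (takeWhile (\<lambda>x. x \<noteq> j) \<sigma>))"

definition before :: "'a list \<Rightarrow> 'a \<Rightarrow> 'a \<Rightarrow> bool" where
  "before \<sigma> a b \<longleftrightarrow> (\<exists>k l. k < l \<and> l < length \<sigma> \<and> \<sigma> ! k = a \<and> \<sigma> ! l = b)"

text \<open>A relation (i, j, I) means "i dominates j on I".  It is violated by schedule \<sigma>
  if j is processed before i and both t_j and t_i - p_j lie in I.\<close>
definition violates :: "('a \<Rightarrow> real) \<Rightarrow> 'a list \<Rightarrow> 'a \<times> 'a \<times> real set \<Rightarrow> bool" where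
  "violates p \<sigma> r = (case r of (i, j, I) \<Rightarrow>
      before \<sigma> j i \<and> start p \<sigma> j \<in> I \<and> start p \<sigma> i - p j \<in> I)"

definition dominance_rule :: "'a set \<Rightarrow> ('a \<Rightarrow> real) \<Rightarrow> ('a \<Rightarrow> real) \<Rightarrow> ('a \<times> 'a \<times> real set) set" where
  "dominance_rule J p w =
    {(i, j, I) | i j I. i \<in> J \<and> j \<in> J \<and> i \<noteq> j \<and> (p i, w i) \<noteq> (p j, w j) \<and>
       ( ((\<forall>t\<ge>0. phi p w i t \<ge> phi p w j t) \<and> I = {0..})
       \<or> (\<not> (\<forall>t\<ge>0. phi p w i t \<ge> phi p w j t) \<and> \<not> (\<forall>t\<ge>0. phi p w j t \<ge> phi p w i t) \<and>
          phi p w i 0 > phi p w j 0 \<and> I = {0..<tstar p w i j})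
       \<or> (\<not> (\<forall>t\<ge>0. phi p w i t \<ge> phi p w j t) \<and> \<not> (\<forall>t\<ge>0. phi p w j t \<ge> phi p w i t) \<and>
          phi p w j 0 > phi p w i 0 \<and> I = {tstar p w j i..}))}"

definition potential_schedule :: "'a set \<Rightarrow> ('a \<Rightarrow> real) \<Rightarrow> ('a \<Rightarrow> real) \<Rightarrow> 'a list \<Rightarrow> bool" where
  "potential_schedule J p w \<sigma> \<longleftrightarrow>
     complete_schedule J \<sigma> \<and> (\<forall>r \<in> dominance_rule J p w. \<not> violates p \<sigma> r)"

end

theory Submission
  imports Defs
begin

lemma takeWhile_nth_distinct:
  "distinct xs \<Longrightarrow> a < length xs \<Longrightarrow> takeWhile (\<lambda>x. x \<noteq> xs ! a) xs = take a xs"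
proof (induction xs arbitrary: a)
  case Nil then show ?case by simp
next
  case (Cons y ys)
  show ?case
  proof (cases a)
    case 0 then show ?thesis by simp
  next
    case (Suc b)
    then have "ys ! b \<noteq> y" using Cons.prems by (metis distinct.simps(2) length_Cons nth_mem Suc_less_SucD)
    then show ?thesis using Suc Cons by auto
  qed
qed

lemma start_nth:
  "distinct xs \<Longrightarrow> a < length xs \<Longrightarrow> start p xs (xs ! a) = sum_list (map p (take a xs))"
  unfolding start_def by (simp add: takeWhile_nth_distinct)

lemma sum_take_mono:
  assumes "m \<le> n" "\<And>x. x \<in> set xs \<Longrightarrow> p x \<ge> (0::real)"
  shows "sum_list (map p (take m xs)) \<le> sum_list (map p (take n xs))"
proof -
  have "take n xs = take m xs @ drop m (take n xs)"
    using assms(1) by (metis append_take_drop_id min.absorb1 take_take)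
  moreover have "sum_list (map p (drop m (take n xs))) \<ge> 0"
    using assms(2) by (intro sum_list_nonneg) (auto dest: in_set_dropD in_set_takeD)
  ultimately show ?thesis by (metis add_le_cancel_left add.right_neutral map_append sum_list_append)
qed

lemma start_order:
  assumes "distinct xs" "a < b" "b < length xs" "\<And>x. x \<in> set xs \<Longrightarrow> p x \<ge> (0::real)"
  shows "start p xs (xs ! a) + p (xs ! a) \<le> start p xs (xs ! b)"
proof -
  have "start p xs (xs ! a) + p (xs ! a) = sum_list (map p (take (Suc a) xs))"
    using assms by (simp add: start_nth take_Suc_conv_app_nth)
  also have "\<dots> \<le> sum_list (map p (take b xs))"
    using assms by (intro sum_take_mono) auto
  finally show ?thesis using assms by (simp add: start_nth)
qed

lemma start_nonneg:
  assumes "\<And>x. x \<in> set xs \<Longrightarrow> p x \<ge> (0::real)"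
  shows "start p xs j \<ge> 0"
  unfolding start_def using assms
  by (intro sum_list_nonneg) (auto dest: set_takeWhileD)

theorem lemma2:
  fixes J :: "'a set" and p w :: "'a \<Rightarrow> real" and i j :: 'a and \<sigma> :: "'a list"
  assumes "finite J"
    and "\<And>k. k \<in> J \<Longrightarrow> p k > 0 \<and> w k > 0"
    and "i \<in> J" and "j \<in> J"
    and "phi p w i 0 > phi p w j 0"
    and "w i * p j \<noteq> w j * p i"
    and "0 < tstar p w i j" and "tstar p w i j < (\<Sum>k\<in>J. p k)"
    and "complete_schedule J \<sigma>"
    and "tstar p w i j \<le> start p \<sigma> i" and "start p \<sigma> i < tstar p w i j + p j"
  shows "\<not> potential_schedule J p w \<sigma>"
proof
  assume pot: "potential_schedule J p w \<sigma>"
  define ts where "ts = tstar p w i j"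
  define D where "D = w i * p j - w j * p i"
  have pi: "p i > 0" "w i > 0" and pj: "p j > 0" "w j > 0" using assms(2-4) by auto
  have ij: "i \<noteq> j" using assms(6) by auto
  have pw: "(p i, w i) \<noteq> (p j, w j)" using assms(6) by auto
  have pw2: "(p j, w j) \<noteq> (p i, w i)" using assms(6) by auto
  have Dne: "D \<noteq> 0" using assms(6) D_def by simp
  have num: "phi p w i t - phi p w j t = (D * t + (w i * (p j)^2 - w j * (p i)^2)) / (p i * (p i + t) * p j * (p j + t))"
    if "t \<ge> 0" for t
  proof -
    have "p i + t > 0" "p j + t > 0" using pi pj that by auto
    then have nz: "p i * (p i + t) \<noteq> 0" "p j * (p j + t) \<noteq> 0" using pi pj by auto
    have "phi p w i t - phi p w j t = (w i * (p j * (p j + t)) - p i * (p i + t) * w j) / (p i * (p i + t) * (p j * (p j + t)))"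
      unfolding phi_def using diff_frac_eq[OF nz] by simp
    also have "\<dots> = (D * t + (w i * (p j)^2 - w j * (p i)^2)) / (p i * (p i + t) * p j * (p j + t))"
      unfolding D_def by (simp add: algebra_simps power2_eq_square)
    finally show ?thesis .
  qed
  have tsD: "D * ts = w j * (p i)^2 - w i * (p j)^2"
    unfolding ts_def tstar_def D_def using Dne D_def by (simp add: field_simps)
  have num2: "phi p w i t - phi p w j t = D * (t - ts) / (p i * (p i + t) * p j * (p j + t))"
    if "t \<ge> 0" for t
    using num[OF that] tsD by (simp add: algebra_simps)
  have pos: "p i * (p i + t) * p j * (p j + t) > 0" if "t \<ge> 0" for t
    using pi pj that by simp
  define Q0 where "Q0 = p i * (p i + 0) * p j * (p j + 0)"
  have Q0: "Q0 > 0" unfolding Q0_def using pos[of 0] by simp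
  have "0 < D * (0 - ts) / Q0"
    unfolding Q0_def using num2[of 0] assms(5) by simp
  then have "D * (0 - ts) / Q0 * Q0 > 0" using Q0 by (rule mult_pos_pos)
  then have "D * (0 - ts) > 0" using Q0 by simp
  have Dneg: "D < 0"
  proof (rule ccontr)
    assume "\<not> D < 0"
    then have "D \<ge> 0" by simp
    moreover have "0 - ts \<le> 0" using assms(7) ts_def by simp
    ultimately have "D * (0 - ts) \<le> 0" by (rule mult_nonneg_nonpos)
    then show False using \<open>D * (0 - ts) > 0\<close> by simp
  qed
  define Q1 where "Q1 = p i * (p i + (ts+1)) * p j * (p j + (ts+1))"
  have Q1: "Q1 > 0" unfolding Q1_def using pos[of "ts+1"] assms(7) ts_def by simp
  have "D * ((ts + 1) - ts) / Q1 < 0"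
    using Dneg Q1 by (simp add: divide_neg_pos)
  then have "phi p w i (ts+1) < phi p w j (ts+1)" using num2[of "ts+1"] assms(7) ts_def unfolding Q1_def by simp
  then have n1: "\<not> (\<forall>t\<ge>0. phi p w i t \<ge> phi p w j t)"
  proof -
    assume lt: "phi p w i (ts+1) < phi p w j (ts+1)"
    have "ts + 1 \<ge> 0" using assms(7) ts_def by simp
    then show ?thesis using lt by (auto simp: not_le)
  qed
  have n2: "\<not> (\<forall>t\<ge>0. phi p w j t \<ge> phi p w i t)"
  proof
    assume "\<forall>t\<ge>0. phi p w j t \<ge> phi p w i t"
    then have "phi p w j 0 \<ge> phi p w i 0" by simp
    then show False using assms(5) by simp
  qed
  have r1: "(i, j, {0..<ts}) \<in> dominance_rule J p w"
    unfolding dominance_rule_def ts_def mem_Collect_eq using assms(3,4,5) ij pw pw2 n1 n2 by simp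
  have r2: "(j, i, {ts..}) \<in> dominance_rule J p w"
    unfolding dominance_rule_def ts_def mem_Collect_eq using assms(3,4,5) ij pw pw2 n1 n2 by simp
  have dist: "distinct \<sigma>" and setJ: "set \<sigma> = J" using assms(9) unfolding complete_schedule_def by auto
  have nn: "\<And>x. x \<in> set \<sigma> \<Longrightarrow> p x \<ge> 0" using assms(2) setJ by (simp add: less_imp_le)
  obtain a where a: "a < length \<sigma>" "\<sigma> ! a = i" using assms(3) setJ by (metis in_set_conv_nth)
  obtain b where b: "b < length \<sigma>" "\<sigma> ! b = j" using assms(4) setJ by (metis in_set_conv_nth)
  have "a \<noteq> b" using a b ij by auto
  then consider "a < b" | "b < a" by linarith
  then show False
  proof cases
    case 1
    have bef: "before \<sigma> i j" unfolding before_def using 1 a b by blast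
    have "start p \<sigma> i + p i \<le> start p \<sigma> j" using start_order[OF dist 1 b(1) nn] a b by simp
    then have "violates p \<sigma> (j, i, {ts..})"
      unfolding violates_def using bef assms(10) ts_def by simp
    then show False using pot r2 unfolding potential_schedule_def by blast
  next
    case 2
    have bef: "before \<sigma> j i" unfolding before_def using 2 a b by blast
    have "start p \<sigma> j + p j \<le> start p \<sigma> i" using start_order[OF dist 2 a(1) nn] a b by simp
    moreover have "start p \<sigma> j \<ge> 0" using start_nonneg[OF nn] .
    ultimately have "violates p \<sigma> (i, j, {0..<ts})"
      unfolding violates_def using bef assms(11) ts_def by simp
    then show False using pot r1 unfolding potential_schedule_def by blast
  qed
qed

end
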